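(* The quiver $Q'=Q^{\mathrm{cut}}(Z)$ is acyclic.
   Context: $(Q,Z)$ is a gentle pair, i.e. a locally gentle pair (every vertex is head, resp. tail, of at most two arrows; every arrow $b$ gives at most one admissible and at most one inadmissible length-2 path of the form $cb$, and likewise of the form $ba$) with only finitely many admissible paths (paths with no subpath in $Z$); equivalently, the semilinear gentle algebra $\Lambda=K_{\boldsymbol{\sigma}}Q/\langle Z\rangle$ is finite-dimensional over the division ring $K$. A vertex $v$ is relational if $v=t(b)=h(a)$ for some $ba\in Z$. The Zembyk excision $Q'=Q^{\mathrm{cut}}(Z)$ (denoted in the paper by $Q$ with a scissors superscript) has vertices $v'$ for non-relational $v\in Q_0$ and two distinct vertices $v(\sharp),v(\flat)$ for each relational $v$, and arrows $a'$ for $a\in Q_1$; heads and tails are those of $Q$ at non-relational vertices, while at a relational vertex $v$ the incident arrows are reattached to $v(\sharp)$ or $v(\flat)$ so that for arrows $a,b$ with $h(a)=v=t(b)$, $b'a'$ is a path in $Q'$ exactly when $ba\notin Z$ (in particular for $ba\in Z$, $\{h'(a'),t'(b')\}=\{v(\sharp),v(\flat)\}$). *)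

theory Defs
  imports Main
begin

text \<open>A length-2 path "b a" (first a, then b) is represented by the pair (b, a), with t b = h a.
  Z is a set of such pairs.  A path of arrows is a list [a1,...,an] traversed left to right,
  i.e. h a_i = t a_(i+1).\<close>

definition quiver :: "'v set \<Rightarrow> 'a set \<Rightarrow> ('a \<Rightarrow> 'v) \<Rightarrow> ('a \<Rightarrow> 'v) \<Rightarrow> bool" where
  "quiver Q0 Q1 h t \<longleftrightarrow> (\<forall>a\<in>Q1. h a \<in> Q0 \<and> t a \<in> Q0)"

definition composable :: "('a \<Rightarrow> 'v) \<Rightarrow> ('a \<Rightarrow> 'v) \<Rightarrow> 'a list \<Rightarrow> bool" where
  "composable h t p \<longleftrightarrow> (\<forall>i. Suc i < length p \<longrightarrow> h (p ! i) = t (p ! Suc i))"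

definition is_path :: "'a set \<Rightarrow> ('a \<Rightarrow> 'v) \<Rightarrow> ('a \<Rightarrow> 'v) \<Rightarrow> 'a list \<Rightarrow> bool" where
  "is_path Q1 h t p \<longleftrightarrow> p \<noteq> [] \<and> set p \<subseteq> Q1 \<and> composable h t p"

definition admissible :: "'a set \<Rightarrow> ('a \<Rightarrow> 'v) \<Rightarrow> ('a \<Rightarrow> 'v) \<Rightarrow> ('a \<times> 'a) set \<Rightarrow> 'a list \<Rightarrow> bool" where
  "admissible Q1 h t Z p \<longleftrightarrow> is_path Q1 h t p \<and>
     (\<forall>i. Suc i < length p \<longrightarrow> (p ! Suc i, p ! i) \<notin> Z)"

definition locally_gentle ::
  "'v set \<Rightarrow> 'a set \<Rightarrow> ('a \<Rightarrow> 'v) \<Rightarrow> ('a \<Rightarrow> 'v) \<Rightarrow> ('a \<times> 'a) set \<Rightarrow> bool" where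
  "locally_gentle Q0 Q1 h t Z \<longleftrightarrow>
     quiver Q0 Q1 h t \<and>
     Z \<subseteq> {(b, a). a \<in> Q1 \<and> b \<in> Q1 \<and> t b = h a} \<and>
     (\<forall>v\<in>Q0. finite {a\<in>Q1. h a = v} \<and> card {a\<in>Q1. h a = v} \<le> 2) \<and>
     (\<forall>v\<in>Q0. finite {a\<in>Q1. t a = v} \<and> card {a\<in>Q1. t a = v} \<le> 2) \<and>
     (\<forall>b\<in>Q1. card {c\<in>Q1. t c = h b \<and> (c, b) \<notin> Z} \<le> 1 \<and>
              card {c\<in>Q1. t c = h b \<and> (c, b) \<in> Z} \<le> 1) \<and>
     (\<forall>b\<in>Q1. card {a\<in>Q1. h a = t b \<and> (b, a) \<notin> Z} \<le> 1 \<and>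
              card {a\<in>Q1. h a = t b \<and> (b, a) \<in> Z} \<le> 1)"

text \<open>Gentle pair: locally gentle with finitely many admissible paths
  (trivial paths = vertices, and nontrivial admissible paths).\<close>
definition gentle_pair ::
  "'v set \<Rightarrow> 'a set \<Rightarrow> ('a \<Rightarrow> 'v) \<Rightarrow> ('a \<Rightarrow> 'v) \<Rightarrow> ('a \<times> 'a) set \<Rightarrow> bool" where
  "gentle_pair Q0 Q1 h t Z \<longleftrightarrow> locally_gentle Q0 Q1 h t Z \<and>
     finite Q0 \<and> finite {p. admissible Q1 h t Z p}"

definition relational :: "'a set \<Rightarrow> ('a \<Rightarrow> 'v) \<Rightarrow> ('a \<Rightarrow> 'v) \<Rightarrow> ('a \<times> 'a) set \<Rightarrow> 'v \<Rightarrow> bool" where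
  "relational Q1 h t Z v \<longleftrightarrow> (\<exists>a\<in>Q1. \<exists>b\<in>Q1. (b, a) \<in> Z \<and> v = t b \<and> v = h a)"

text \<open>Vertices of the excision: v' for non-relational v, v(sharp) and v(flat) for relational v.\<close>
datatype 'v cut_vertex = Plain 'v | Sharp 'v | Flat 'v

definition cut_vertices :: "'v set \<Rightarrow> 'a set \<Rightarrow> ('a \<Rightarrow> 'v) \<Rightarrow> ('a \<Rightarrow> 'v) \<Rightarrow> ('a \<times> 'a) set
    \<Rightarrow> 'v cut_vertex set" where
  "cut_vertices Q0 Q1 h t Z =
     Plain ` {v\<in>Q0. \<not> relational Q1 h t Z v} \<union>
     Sharp ` {v\<in>Q0. relational Q1 h t Z v} \<union> Flat ` {v\<in>Q0. relational Q1 h t Z v}"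

text \<open>(h', t') is a Zembyk excision of (Q, Z): arrows a' are identified with a \<in> Q1.\<close>
definition zembyk_excision ::
  "'v set \<Rightarrow> 'a set \<Rightarrow> ('a \<Rightarrow> 'v) \<Rightarrow> ('a \<Rightarrow> 'v) \<Rightarrow> ('a \<times> 'a) set
   \<Rightarrow> ('a \<Rightarrow> 'v cut_vertex) \<Rightarrow> ('a \<Rightarrow> 'v cut_vertex) \<Rightarrow> bool" where
  "zembyk_excision Q0 Q1 h t Z h' t' \<longleftrightarrow>
     (\<forall>a\<in>Q1. (\<not> relational Q1 h t Z (h a) \<longrightarrow> h' a = Plain (h a)) \<and>
             (relational Q1 h t Z (h a) \<longrightarrow> h' a \<in> {Sharp (h a), Flat (h a)}) \<and>
             (\<not> relational Q1 h t Z (t a) \<longrightarrow> t' a = Plain (t a)) \<and>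
             (relational Q1 h t Z (t a) \<longrightarrow> t' a \<in> {Sharp (t a), Flat (t a)})) \<and>
     (\<forall>a\<in>Q1. \<forall>b\<in>Q1. h a = t b \<longrightarrow> (h' a = t' b \<longleftrightarrow> (b, a) \<notin> Z))"

definition acyclic_quiver :: "'a set \<Rightarrow> ('a \<Rightarrow> 'w) \<Rightarrow> ('a \<Rightarrow> 'w) \<Rightarrow> bool" where
  "acyclic_quiver Q1 h t \<longleftrightarrow>
     (\<nexists>p. is_path Q1 h t p \<and> h (last p) = t (hd p))"

end

theory Submission
  imports Defs
begin

lemma cut_eq:
  assumes "zembyk_excision Q0 Q1 h t Z h' t'" "a \<in> Q1" "b \<in> Q1" "h' a = t' b"
  shows "h a = t b \<and> (b, a) \<notin> Z"
proof -
  have 1: "h a = t b"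
  
  proof -
    have "h' a \<in> {Plain (h a), Sharp (h a), Flat (h a)}"
      using assms(1,2) unfolding zembyk_excision_def
      by (cases "relational Q1 h t Z (h a)") auto
    moreover have "t' b \<in> {Plain (t b), Sharp (t b), Flat (t b)}"
      using assms(1,3) unfolding zembyk_excision_def
      by (cases "relational Q1 h t Z (t b)") auto
    ultimately show ?thesis using assms(4) by auto
  qed
  have "\<forall>a\<in>Q1. \<forall>b\<in>Q1. h a = t b \<longrightarrow> (h' a = t' b \<longleftrightarrow> (b, a) \<notin> Z)"
    using assms(1) unfolding zembyk_excision_def by (rule conjunct2)
  then have "(b, a) \<notin> Z" using 1 assms(2,3,4) by blast
  with 1 show ?thesis by simp
qed

theorem lemma5p20:
  fixes Q0 :: "'v set" and Q1 :: "'a set" and h t :: "'a \<Rightarrow> 'v"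
    and Z :: "('a \<times> 'a) set" and h' t' :: "'a \<Rightarrow> 'v cut_vertex"
  assumes "gentle_pair Q0 Q1 h t Z"
    and "zembyk_excision Q0 Q1 h t Z h' t'"
  shows "acyclic_quiver Q1 h' t'"
  unfolding acyclic_quiver_def
proof
  assume "\<exists>p. is_path Q1 h' t' p \<and> h' (last p) = t' (hd p)"
  then obtain p where pp: "is_path Q1 h' t' p" and cyc: "h' (last p) = t' (hd p)" by blast
  define L where "L = length p"
  have L0: "L > 0" using pp unfolding is_path_def L_def by simp
  have inQ: "\<And>j. j < L \<Longrightarrow> p ! j \<in> Q1" using pp unfolding is_path_def L_def by auto
  have step: "h' (p ! j) = t' (p ! (Suc j mod L))" if "j < L" for j
  proof (cases "Suc j < L")
    case True
    then show ?thesis using pp unfolding is_path_def composable_def L_def by simp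
  next
    case False
    then have "Suc j = L" using that by auto
    then have "j = L - 1" "Suc j mod L = 0" by auto
    then show ?thesis using cyc L0 pp unfolding L_def is_path_def
      by (simp add: last_conv_nth hd_conv_nth)
  qed
  have good: "h (p ! j) = t (p ! (Suc j mod L)) \<and> (p ! (Suc j mod L), p ! j) \<notin> Z"
    if "j < L" for j
  proof -
    have "Suc j mod L < L" using L0 by simp
    then show ?thesis using cut_eq[OF assms(2) inQ[OF that] inQ step[OF that]] by simp
  qed
  define q where "q n = map (\<lambda>i. p ! (i mod L)) [0..<Suc n]" for n
  have adm: "admissible Q1 h t Z (q n)" for n
  proof -
    have len: "length (q n) = Suc n" unfolding q_def by simp
    have nth: "q n ! i = p ! (i mod L)" if "i < Suc n" for i
      unfolding q_def using that by (simp del: upt_Suc)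
    have s1: "set (q n) \<subseteq> Q1"
    proof
      fix x assume "x \<in> set (q n)"
      then obtain i where "i < Suc n" "x = q n ! i" using len by (metis in_set_conv_nth)
      then show "x \<in> Q1" using nth inQ L0 by simp
    qed
    have s2: "h (q n ! i) = t (q n ! Suc i) \<and> (q n ! Suc i, q n ! i) \<notin> Z"
      if "Suc i < length (q n)" for i
    proof -
      have mm: "Suc (i mod L) mod L = Suc i mod L" by (simp add: mod_Suc_eq)
      have "i mod L < L" using L0 by simp
      from good[OF this] have "h (p ! (i mod L)) = t (p ! (Suc i mod L)) \<and>
          (p ! (Suc i mod L), p ! (i mod L)) \<notin> Z" using mm by simp
      moreover have "q n ! i = p ! (i mod L)" "q n ! Suc i = p ! (Suc i mod L)"
        using nth that len by auto
      ultimately show ?thesis by simp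
    qed
    have "q n \<noteq> []" using len by auto
    then show ?thesis unfolding admissible_def is_path_def composable_def
      using s1 s2 by blast
  qed
  have "inj q" unfolding inj_def q_def
    by (metis diff_zero length_map length_upt nat.inject)
  then have "infinite (range q)" using finite_imageD infinite_UNIV_nat by blast
  moreover have "range q \<subseteq> {p. admissible Q1 h t Z p}" using adm by auto
  ultimately show False using assms(1) unfolding gentle_pair_def
    using finite_subset by blast
qed

end
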